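(* Let $N\ge2$, $0<\varepsilon<\pi/2$ and $0<\eta<\min\{\pi/4,\varepsilon/2\}$. For $\lambda\in\Sigma_\varepsilon$ and $\xi'\in\tilde\Sigma_\eta^{N-1}$ let $A=\sqrt{\sum_{j=1}^{N-1}\xi_j^2}$, $B=\sqrt{\lambda+A^2}$ (square roots with positive real part), $\tilde A=\sqrt{\sum_{j=1}^{N-1}|\xi_j|^2}$, and $D(A,B)=B^3+AB^2+3A^2B-A^3$. Then there exists a positive constant $c$ such that \[ c(|\lambda|^{1/2}+\tilde A)^3\le|D(A,B)|\qquad(\lambda\in\Sigma_\varepsilon,\ \xi'\in\tilde\Sigma_\eta^{N-1}). \]
   Context: $\Sigma_\varepsilon=\{\lambda\in\mathbb{C}\setminus\{0\}:|\arg\lambda|<\pi-\varepsilon\}$; $\tilde\Sigma_\eta=\{z\in\mathbb{C}\setminus\{0\}:|\arg z|<\eta\}\cup\{z\in\mathbb{C}\setminus\{0\}:\pi-\eta<|\arg z|\}$, and $\tilde\Sigma_\eta^{N-1}$ is its $(N-1)$-fold product. *)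

theory Defs
  imports "HOL-Analysis.Analysis"
begin

definition Sigma_sector :: "real \<Rightarrow> complex set" where
  "Sigma_sector \<epsilon> = {l. l \<noteq> 0 \<and> \<bar>Arg l\<bar> < pi - \<epsilon>}"

definition tSigma_sector :: "real \<Rightarrow> complex set" where
  "tSigma_sector \<eta> = {z. z \<noteq> 0 \<and> (\<bar>Arg z\<bar> < \<eta> \<or> pi - \<eta> < \<bar>Arg z\<bar>)}"

definition Dfun :: "complex \<Rightarrow> complex \<Rightarrow> complex" where
  "Dfun A B = B^3 + A * B^2 + 3 * A^2 * B - A^3"

end

theory Submission
  imports Defs
begin


lemma core_pos:
  fixes x y X Y \<tau> T P :: real
  assumes X: "X > 0" and Yb: "\<bar>Y\<bar> \<le> \<tau> * X" and t1: "\<tau> < 1" and t0: "0 < \<tau>"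
    and T: "T * (1 - \<tau>^2) > 2 * \<tau>" and y: "y > 0" and yx: "y^2 = 3*x^2 + 2*x + 3"
    and xn: "x < 0" and x1: "x > -1" and re: "x*X - y*Y \<ge> 0" and P: "P = 2*x^2+2*x+4"
  shows "-P*(X^2-Y^2) - 4*x*y*X*Y < 0 \<and> \<bar>-2*P*X*Y + 2*x*y*(X^2-Y^2)\<bar> < - T * (-P*(X^2-Y^2) - 4*x*y*X*Y)"
proof -
  have tt: "1 - \<tau>^2 > 0"
  proof -
    have "\<tau>*\<tau> < \<tau>*1" using t0 t1 by (intro mult_strict_left_mono) auto
    thus ?thesis using t1 by (simp add: power2_eq_square)
  qed
  have Tpos: "T > 0"
  proof -
    have "0 < T * (1 - \<tau>^2)" using T t0 by linarith
    thus ?thesis using tt by (simp add: zero_less_mult_iff)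
  qed
  have "x * X < 0" using xn X by (simp add: mult_neg_pos)
  hence yY: "y*Y < 0" using re by linarith
  hence Yn: "Y < 0" using y by (simp add: mult_less_0_iff)
  define V where "V = - X*Y"
  define q where "q = - x*y"
  define D where "D = X^2 - Y^2"
  have Vp: "V > 0" using X Yn by (simp add: V_def mult_pos_neg)
  have qp: "q > 0" using xn y by (simp add: q_def mult_neg_pos)
  have YX: "-Y \<le> \<tau> * X" using Yb Yn by simp
  have D1: "D \<ge> (1-\<tau>^2) * X^2"
  proof -
    have "Y^2 \<le> (\<tau>*X)^2" using power_mono[OF YX, of 2] Yn by simp
    thus ?thesis by (simp add: D_def power_mult_distrib algebra_simps)
  qed
  have Dp: "D > 0"
  proof -
    have "(1-\<tau>^2) * X^2 > 0" using tt X by simp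
    thus ?thesis using D1 by linarith
  qed
  have key1: "T * D > 2 * V"
  proof -
    have "T * D \<ge> T * ((1-\<tau>^2) * X^2)" using D1 Tpos by (simp add: mult_left_mono)
    moreover have "T * ((1-\<tau>^2) * X^2) > (2*\<tau>)*X^2" using T X
      by (simp add: mult.assoc[symmetric])
    moreover have "X * (-Y) \<le> X * (\<tau> * X)" using YX X by (intro mult_left_mono) auto
    hence "2*\<tau>*X^2 \<ge> 2 * V" by (simp add: V_def power2_eq_square algebra_simps)
    ultimately show ?thesis by linarith
  qed
  have "x^2 < 1" using x1 xn by (simp add: abs_square_less_1)
  hence Pp: "P \<ge> y^2" using P yx by linarith
  have yp2: "y^2 > 0" using y by simp
  have Ppos: "P > 0" using Pp yp2 by linarith
  have key2: "P * V \<ge> q * X^2"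
  proof -
    have "X * (-(y*Y)) \<ge> X * (-(x*X))" using re X by (intro mult_left_mono) auto
    hence yV: "y * V \<ge> -x * X^2" by (simp add: V_def power2_eq_square algebra_simps)
    have "P * (y * V) \<ge> P * (-x * X^2)" using Pp yp2 yV by (intro mult_left_mono) linarith+
    moreover have "P * (-x * X^2) \<ge> y^2 * (-x * X^2)" using Pp xn X by (intro mult_right_mono) (auto simp: mult_nonpos_nonneg)
    ultimately have "y * (P * V) \<ge> y * (q * X^2)" by (simp add: q_def power2_eq_square algebra_simps)
    thus ?thesis using y by simp
  qed
  have key3: "q * D \<le> q * X^2" using qp by (simp add: D_def)
  have re_eq: "-P*(X^2-Y^2) - 4*x*y*X*Y = -(P*D + 4*(q*V))" by (simp add: D_def q_def V_def algebra_simps)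
  have im_eq: "-2*P*X*Y + 2*x*y*(X^2-Y^2) = 2*(P*V) - 2*(q*D)" by (simp add: D_def q_def V_def algebra_simps)
  have PD: "P * D > 0" using Pp Dp yp2 by (intro mult_pos_pos) linarith+
  have "T * (P*D + 4*(q*V)) = P * (T*D) + 4*(T*(q*V))" by (simp add: algebra_simps)
  moreover have "P * (T*D) > P * (2*V)" using key1 Ppos by (intro mult_strict_left_mono) auto
  moreover have "T*(q*V) > 0" using Tpos qp Vp by simp
  ultimately have big: "T * (P*D + 4*(q*V)) > 2*(P*V)" by linarith
  have qV: "q*V > 0" using qp Vp by simp
  have qD: "q*D > 0" using qp Dp by simp
  have e: "- T * (-(P*D + 4*(q*V))) = T * (P*D + 4*(q*V))" by (simp add: algebra_simps)
  show ?thesis unfolding re_eq im_eq e using big key2 key3 PD qV qD by (simp add: abs_less_iff)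
qed

lemma keyT:
  fixes X Y \<tau> T :: real
  assumes X: "X > 0" and Yb: "\<bar>Y\<bar> \<le> \<tau> * X" and t1: "\<tau> < 1" and t0: "0 < \<tau>"
    and T: "T * (1 - \<tau>^2) > 2 * \<tau>"
  shows "T * (X^2 - Y^2) > 2 * X * \<bar>Y\<bar> \<and> X^2 - Y^2 > 0 \<and> T > 0"
proof -
  have tt: "1 - \<tau>^2 > 0"
  proof -
    have "\<tau>*\<tau> < \<tau>*1" using t0 t1 by (intro mult_strict_left_mono) auto
    thus ?thesis using t1 by (simp add: power2_eq_square)
  qed
  have Tpos: "T > 0"
  proof -
    have "0 < T * (1 - \<tau>^2)" using T t0 by linarith
    thus ?thesis using tt by (simp add: zero_less_mult_iff)
  qed
  have D1: "X^2 - Y^2 \<ge> (1-\<tau>^2) * X^2"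
  proof -
    have "\<bar>Y\<bar>^2 \<le> (\<tau>*X)^2" using power_mono[OF Yb, of 2] by simp
    thus ?thesis by (simp add: power_mult_distrib algebra_simps)
  qed
  have Dp: "X^2 - Y^2 > 0"
  proof -
    have "(1-\<tau>^2) * X^2 > 0" using tt X by simp
    thus ?thesis using D1 by linarith
  qed
  have "T * (X^2 - Y^2) \<ge> T * ((1-\<tau>^2) * X^2)" using D1 Tpos by (simp add: mult_left_mono)
  moreover have "T * ((1-\<tau>^2) * X^2) > (2*\<tau>)*X^2" using T X
    by (simp add: mult.assoc[symmetric])
  moreover have "X * \<bar>Y\<bar> \<le> X * (\<tau> * X)" using Yb X by (intro mult_left_mono) auto
  hence "2*\<tau>*X^2 \<ge> 2 * X * \<bar>Y\<bar>" by (simp add: power2_eq_square algebra_simps)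
  ultimately show ?thesis using Dp Tpos by linarith
qed

lemma root_forbidden:
  fixes u t :: complex and \<tau> T :: real
  assumes Yb: "\<bar>Im u\<bar> \<le> \<tau> * Re u" and u0: "u \<noteq> 0" and t0: "0 < \<tau>" and t1: "\<tau> < 1"
    and T: "T * (1 - \<tau>^2) > 2 * \<tau>" and re: "0 \<le> Re (t * u)"
    and p: "t^3 + t^2 + 3*t - 1 = 0"
  shows "Re ((t^2-1)*u^2) < 0 \<and> \<bar>Im ((t^2-1)*u^2)\<bar> < - T * Re ((t^2-1)*u^2)"
proof -
  define X where "X = Re u"
  define Y where "Y = Im u"
  define x where "x = Re t"
  define y where "y = Im t"
  have X: "X > 0"
  proof (rule ccontr)
    assume "\<not> X > 0"
    hence "X \<le> 0" by simp
    moreover have "\<bar>Y\<bar> \<le> \<tau> * X" using Yb by (simp add: X_def Y_def)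
    moreover have "\<tau>*X \<le> 0" using t0 \<open>X \<le> 0\<close> by (simp add: mult_nonneg_nonpos)
    ultimately have "\<bar>Y\<bar> = 0" "\<tau> * X = 0" using abs_ge_zero[of Y] by linarith+
    hence "Y = 0" "X = 0" using t0 by auto
    thus False using u0 by (simp add: X_def Y_def complex_eq_iff)
  qed
  have Ybd: "\<bar>Y\<bar> \<le> \<tau> * X" using Yb by (simp add: X_def Y_def)
  have re': "x*X - y*Y \<ge> 0" using re by (simp add: X_def Y_def x_def y_def)
  have ER: "x^3 - 3*x*y^2 + x^2 - y^2 + 3*x - 1 = 0"
  proof -
    have "Re (t^3 + t^2 + 3*t - 1) = 0" using p by simp
    thus ?thesis by (simp add: x_def y_def power3_eq_cube power2_eq_square algebra_simps)
  qed
  have EI: "y * (3*x^2 - y^2 + 2*x + 3) = 0"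
  proof -
    have "Im (t^3 + t^2 + 3*t - 1) = 0" using p by simp
    thus ?thesis by (simp add: x_def y_def power3_eq_cube power2_eq_square algebra_simps)
  qed
  have Rz: "Re ((t^2-1)*u^2) = (x^2-y^2-1)*(X^2-Y^2) - 4*x*y*X*Y"
    by (simp add: X_def Y_def x_def y_def power2_eq_square algebra_simps)
  have Iz: "Im ((t^2-1)*u^2) = (x^2-y^2-1)*(2*X*Y) + 2*x*y*(X^2-Y^2)"
    by (simp add: X_def Y_def x_def y_def power2_eq_square algebra_simps)
  obtain KT: "T * (X^2 - Y^2) > 2 * X * \<bar>Y\<bar>" and KD: "X^2 - Y^2 > 0" and Tp: "T > 0"
    using keyT[OF X Ybd t1 t0 T] by blast
  show ?thesis
  proof (cases "y = 0")
    case True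
    hence px: "x^3 + x^2 + 3*x - 1 = 0" using ER by simp
    have xp: "x > 0"
    proof (rule ccontr)
      assume "\<not> x > 0"
      have "0 \<le> (x+1/2)^2" by simp
      hence "0 \<le> x^2 + x + 3" by (simp add: power2_eq_square algebra_simps)
      hence "x * (x^2 + x + 3) \<le> 0" using \<open>\<not> x > 0\<close> by (intro mult_nonpos_nonneg) auto
      thus False using px by (simp add: power2_eq_square power3_eq_cube algebra_simps)
    qed
    have x1: "x < 1"
    proof (rule ccontr)
      assume "\<not> x < 1"
      hence "x^3 \<ge> 1" "x^2 \<ge> 1" by (simp_all add: one_le_power)
      thus False using px \<open>\<not> x < 1\<close> by linarith
    qed
    have c: "1 - x^2 > 0" using xp x1 by (simp add: abs_square_less_1)
    have R: "Re ((t^2-1)*u^2) = -((1-x^2)*(X^2-Y^2))" unfolding Rz using True by (simp add: algebra_simps)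
    have "Im ((t^2-1)*u^2) = -((1-x^2)*(2*X*Y))" unfolding Iz using True by (simp add: algebra_simps)
    hence I: "\<bar>Im ((t^2-1)*u^2)\<bar> = (1-x^2)*(2*X*\<bar>Y\<bar>)" using c X by (simp add: abs_mult)
    have a: "(1-x^2)*(2*X*\<bar>Y\<bar>) < (1-x^2) * (T * (X^2 - Y^2))"
      using KT c by (intro mult_strict_left_mono) auto
    have b: "(1-x^2)*(X^2-Y^2) > 0" using c KD by simp
    have e: "- T * (-((1-x^2)*(X^2-Y^2))) = (1-x^2) * (T * (X^2 - Y^2))" by (simp add: algebra_simps)
    show ?thesis unfolding R I e using a b by linarith
  next
    case False
    hence yx: "y^2 = 3*x^2 + 2*x + 3" using EI by simp
    have E2: "2*x^3 + 2*x^2 + 2*x + 1 = 0"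
    proof -
      have "x^3 - 3*x*(3*x^2 + 2*x + 3) + x^2 - (3*x^2 + 2*x + 3) + 3*x - 1 = 0"
        using ER yx by simp
      thus ?thesis by (simp add: power2_eq_square power3_eq_cube algebra_simps)
    qed
    have xn: "x < 0"
    proof (rule ccontr)
      assume "\<not> x < 0"
      hence "x^3 \<ge> 0" "x^2 \<ge> 0" by simp_all
      thus False using E2 \<open>\<not> x < 0\<close> by linarith
    qed
    have x1: "x > -1"
    proof (rule ccontr)
      assume "\<not> x > -1"
      hence "x^2 * (x + 1) \<le> 0" by (intro mult_nonneg_nonpos) auto
      thus False using E2 \<open>\<not> x > -1\<close> by (simp add: power2_eq_square power3_eq_cube algebra_simps)
    qed
    define P where "P = 2*x^2+2*x+4"
    have m: "x^2-y^2-1 = -P" using yx by (simp add: P_def)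
    show ?thesis
    proof (cases "y > 0")
      case True
      have "-P*(X^2-Y^2) - 4*x*y*X*Y < 0 \<and> \<bar>-2*P*X*Y + 2*x*y*(X^2-Y^2)\<bar> < - T * (-P*(X^2-Y^2) - 4*x*y*X*Y)"
        by (rule core_pos[OF X Ybd t1 t0 T True yx xn x1 re' P_def])
      thus ?thesis unfolding Rz Iz m by (simp add: algebra_simps)
    next
      case False
      hence yn: "-y > 0" using \<open>y \<noteq> 0\<close> by simp
      have Ybd': "\<bar>-Y\<bar> \<le> \<tau> * X" using Ybd by simp
      have yx': "(-y)^2 = 3*x^2 + 2*x + 3" using yx by simp
      have re'': "x*X - (-y)*(-Y) \<ge> 0" using re' by simp
      have "-P*(X^2-(-Y)^2) - 4*x*(-y)*X*(-Y) < 0 \<and> \<bar>-2*P*X*(-Y) + 2*x*(-y)*(X^2-(-Y)^2)\<bar> < - T * (-P*(X^2-(-Y)^2) - 4*x*(-y)*X*(-Y))"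
        by (rule core_pos[OF X Ybd' t1 t0 T yn yx' xn x1 re'' P_def])
      hence "-P*(X^2-Y^2) - 4*x*y*X*Y < 0 \<and> \<bar>-(-2*P*X*Y + 2*x*y*(X^2-Y^2))\<bar> < - T * (-P*(X^2-Y^2) - 4*x*y*X*Y)"
        by (simp add: algebra_simps)
      hence "-P*(X^2-Y^2) - 4*x*y*X*Y < 0 \<and> \<bar>-2*P*X*Y + 2*x*y*(X^2-Y^2)\<bar> < - T * (-P*(X^2-Y^2) - 4*x*y*X*Y)"
        by (simp only: abs_minus_cancel)
      thus ?thesis unfolding Rz Iz m by (simp add: algebra_simps)
    qed
  qed
qed


lemma compact_bound:
  fixes \<tau> T :: real
  assumes t0: "0 < \<tau>" and t1: "\<tau> < 1" and T: "T * (1 - \<tau>^2) > 2 * \<tau>"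
  shows "\<exists>m>0. \<forall>u t::complex. cmod u = 1 \<longrightarrow> \<bar>Im u\<bar> \<le> \<tau> * Re u \<longrightarrow> cmod t \<le> 4
     \<longrightarrow> 0 \<le> Re (t*u) \<longrightarrow> (0 \<le> Re ((t^2-1)*u^2) \<or> - T * Re ((t^2-1)*u^2) \<le> \<bar>Im ((t^2-1)*u^2)\<bar>)
     \<longrightarrow> m \<le> cmod (t^3 + t^2 + 3*t - 1)"
proof -
  define K where "K = {p::complex\<times>complex. cmod (fst p) = 1 \<and> \<bar>Im (fst p)\<bar> \<le> \<tau> * Re (fst p) \<and> cmod (snd p) \<le> 4
     \<and> 0 \<le> Re (snd p * fst p) \<and> (0 \<le> Re (((snd p)^2-1)*(fst p)^2) \<or> - T * Re (((snd p)^2-1)*(fst p)^2) \<le> \<bar>Im (((snd p)^2-1)*(fst p)^2)\<bar>)}"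
  have cl: "closed K" unfolding K_def
    by (intro closed_Collect_conj closed_Collect_disj closed_Collect_eq closed_Collect_le continuous_intros)
  have bd: "bounded K"
  proof -
    have "norm p \<le> 5" if "p \<in> K" for p
    proof -
      obtain u t where p: "p = (u,t)" by (cases p)
      have "norm (u,t) \<le> norm u + norm t" by (rule norm_Pair_le)
      thus ?thesis using that p by (auto simp: K_def)
    qed
    thus ?thesis unfolding bounded_iff by blast
  qed
  have cK: "compact K" using cl bd by (simp add: compact_eq_bounded_closed)
  have ne: "(1,1) \<in> K" using t0 by (simp add: K_def)
  have ct: "continuous_on K (\<lambda>p. cmod ((snd p)^3 + (snd p)^2 + 3*(snd p) - 1))"
    by (intro continuous_intros)
  obtain p0 where p0K: "p0 \<in> K" and p0min: "\<forall>q\<in>K. cmod ((snd p0)^3 + (snd p0)^2 + 3*(snd p0) - 1) \<le> cmod ((snd q)^3 + (snd q)^2 + 3*(snd q) - 1)"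
    using continuous_attains_inf[OF cK _ ct] ne by blast
  define m where "m = cmod ((snd p0)^3 + (snd p0)^2 + 3*(snd p0) - 1)"
  have mpos: "m > 0"
  proof (rule ccontr)
    assume "\<not> m > 0"
    hence pz: "(snd p0)^3 + (snd p0)^2 + 3*(snd p0) - 1 = 0" by (simp add: m_def)
    have u1: "cmod (fst p0) = 1" and Yb: "\<bar>Im (fst p0)\<bar> \<le> \<tau> * Re (fst p0)"
      and re: "0 \<le> Re (snd p0 * fst p0)"
      and dj: "0 \<le> Re (((snd p0)^2-1)*(fst p0)^2) \<or> - T * Re (((snd p0)^2-1)*(fst p0)^2) \<le> \<bar>Im (((snd p0)^2-1)*(fst p0)^2)\<bar>"
      using p0K by (auto simp: K_def)
    have u0: "fst p0 \<noteq> 0" using u1 by auto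
    show False using root_forbidden[OF Yb u0 t0 t1 T re pz] dj by linarith
  qed
  show ?thesis
  proof (intro exI[of _ m] conjI mpos allI impI)
    fix u t :: complex
    assume "cmod u = 1" "\<bar>Im u\<bar> \<le> \<tau> * Re u" "cmod t \<le> 4" "0 \<le> Re (t*u)"
      "0 \<le> Re ((t^2-1)*u^2) \<or> - T * Re ((t^2-1)*u^2) \<le> \<bar>Im ((t^2-1)*u^2)\<bar>"
    hence "(u,t) \<in> K" by (simp add: K_def)
    thus "m \<le> cmod (t^3 + t^2 + 3*t - 1)" using p0min unfolding m_def by fastforce
  qed
qed


lemma trig1:
  fixes \<phi> \<eta> :: real
  assumes "0 \<le> \<phi>" "\<phi> < \<eta>" "\<eta> < pi/2"
  shows "sin \<phi> \<le> tan \<eta> * cos \<phi> \<and> cos \<phi> > 0"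
proof -
  have c: "cos \<phi> > 0" using assms by (intro cos_gt_zero_pi) auto
  have "tan \<phi> \<le> tan \<eta>" using assms by (intro tan_mono_le) auto
  hence "tan \<phi> * cos \<phi> \<le> tan \<eta> * cos \<phi>" using c by (intro mult_right_mono) auto
  moreover have "tan \<phi> * cos \<phi> = sin \<phi>" using c by (simp add: tan_def)
  ultimately show ?thesis using c by simp
qed

lemma trig2:
  fixes \<phi> \<epsilon> :: real
  assumes "0 < \<epsilon>" "\<epsilon> \<le> \<phi>" "\<phi> < pi/2"
  shows "tan \<epsilon> * cos \<phi> \<le> sin \<phi>"
proof -
  have c: "cos \<phi> > 0" using assms by (intro cos_gt_zero_pi) auto
  have "tan \<epsilon> \<le> tan \<phi>" using assms by (intro tan_mono_le) auto
  hence "tan \<epsilon> * cos \<phi> \<le> tan \<phi> * cos \<phi>" using c by (intro mult_right_mono) auto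
  moreover have "tan \<phi> * cos \<phi> = sin \<phi>" using c by (simp add: tan_def)
  ultimately show ?thesis by simp
qed

lemma polar_abs:
  fixes z :: complex
  shows "Re z = cmod z * cos \<bar>Arg z\<bar> \<and> \<bar>Im z\<bar> = cmod z * sin \<bar>Arg z\<bar> \<and> \<bar>Arg z\<bar> \<le> pi"
proof -
  have "Re z = Re (rcis (cmod z) (Arg z))" "Im z = Im (rcis (cmod z) (Arg z))" by (simp_all add: rcis_cmod_Arg)
  hence R: "Re z = cmod z * cos (Arg z)" and I: "Im z = cmod z * sin (Arg z)" by simp_all
  have b: "\<bar>Arg z\<bar> \<le> pi" using mpi_less_Arg[of z] Arg_le_pi[of z] by linarith
  have "cos (Arg z) = cos \<bar>Arg z\<bar>" by (cases "Arg z \<ge> 0") auto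
  moreover have "\<bar>sin (Arg z)\<bar> = sin \<bar>Arg z\<bar>"
  proof -
    have "sin \<bar>Arg z\<bar> \<ge> 0" using b by (intro sin_ge_zero) auto
    thus ?thesis by (cases "Arg z \<ge> 0") auto
  qed
  ultimately show ?thesis using R I b by (simp add: abs_mult)
qed

lemma xi_conv:
  fixes z :: complex and \<eta> :: real
  assumes "z \<in> tSigma_sector \<eta>" "0 < \<eta>" "\<eta> < pi/4"
  shows "\<bar>Im z\<bar> \<le> tan \<eta> * \<bar>Re z\<bar> \<and> Re z \<noteq> 0"
proof -
  define \<theta> where "\<theta> = \<bar>Arg z\<bar>"
  have z0: "z \<noteq> 0" and c: "\<theta> < \<eta> \<or> pi - \<eta> < \<theta>" using assms(1) by (auto simp: tSigma_sector_def \<theta>_def)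
  have P: "Re z = cmod z * cos \<theta>" "\<bar>Im z\<bar> = cmod z * sin \<theta>" "\<theta> \<le> pi" "0 \<le> \<theta>"
    using polar_abs[of z] by (auto simp: \<theta>_def)
  have nz: "cmod z > 0" using z0 by simp
  show ?thesis
  proof (cases "\<theta> < \<eta>")
    case True
    have "sin \<theta> \<le> tan \<eta> * cos \<theta> \<and> cos \<theta> > 0" using True P assms by (intro trig1) auto
    hence "cmod z * sin \<theta> \<le> cmod z * (tan \<eta> * cos \<theta>)" "cos \<theta> > 0"
      using nz by (auto intro: mult_left_mono)
    thus ?thesis using P nz by (simp add: abs_mult)
  next
    case False
    hence G: "pi - \<eta> < \<theta>" using c by simp
    define \<phi> where "\<phi> = pi - \<theta>"
    have "sin \<phi> \<le> tan \<eta> * cos \<phi> \<and> cos \<phi> > 0" using G P assms by (intro trig1) (auto simp: \<phi>_def)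
    moreover have "sin \<theta> = sin \<phi>" "cos \<theta> = - cos \<phi>" by (simp_all add: \<phi>_def)
    ultimately have "cmod z * sin \<theta> \<le> cmod z * (tan \<eta> * cos \<phi>)" "cos \<phi> > 0" "cos \<theta> = - cos \<phi>"
      using nz by (auto intro: mult_left_mono)
    thus ?thesis using P nz by (simp add: abs_mult)
  qed
qed

lemma lam_conv:
  fixes l :: complex and \<epsilon> :: real
  assumes "l \<in> Sigma_sector \<epsilon>" "0 < \<epsilon>" "\<epsilon> < pi/2"
  shows "0 \<le> Re l \<or> - tan \<epsilon> * Re l \<le> \<bar>Im l\<bar>"
proof (cases "0 \<le> Re l")
  case True
  thus ?thesis by simp
next
  case False
  hence neg: "Re l < 0" by simp
  define \<theta> where "\<theta> = \<bar>Arg l\<bar>"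
  have l0: "l \<noteq> 0" and c: "\<theta> < pi - \<epsilon>" using assms(1) by (auto simp: Sigma_sector_def \<theta>_def)
  have P: "Re l = cmod l * cos \<theta>" "\<bar>Im l\<bar> = cmod l * sin \<theta>" "\<theta> \<le> pi" "0 \<le> \<theta>"
    using polar_abs[of l] by (auto simp: \<theta>_def)
  have nz: "cmod l > 0" using l0 by simp
  have "\<theta> > pi/2"
  proof (rule ccontr)
    assume "\<not> \<theta> > pi/2"
    hence "cos \<theta> \<ge> 0" using P by (intro cos_ge_zero) auto
    hence "cmod l * cos \<theta> \<ge> 0" by simp
    thus False using neg P by linarith
  qed
  define \<phi> where "\<phi> = pi - \<theta>"
  have "tan \<epsilon> * cos \<phi> \<le> sin \<phi>" using c \<open>\<theta> > pi/2\<close> assms by (intro trig2) (auto simp: \<phi>_def)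
  moreover have "sin \<theta> = sin \<phi>" "cos \<theta> = - cos \<phi>" by (simp_all add: \<phi>_def)
  ultimately have "cmod l * (tan \<epsilon> * cos \<phi>) \<le> cmod l * sin \<theta>" "cos \<theta> = - cos \<phi>"
    using nz by (auto intro: mult_left_mono)
  hence "- tan \<epsilon> * Re l \<le> \<bar>Im l\<bar>" using P by (simp add: algebra_simps)
  thus ?thesis by simp
qed



lemma sq_conv:
  fixes X Y \<tau> :: real
  assumes X: "X \<noteq> 0" and Yb: "\<bar>Y\<bar> \<le> \<tau> * \<bar>X\<bar>" and t0: "0 < \<tau>" and t1: "\<tau> < 1"
  shows "(1-\<tau>^2) * \<bar>2*X*Y\<bar> \<le> 2*\<tau>*(X^2-Y^2) \<and> (1-\<tau>^2)*(X^2+Y^2) \<le> (1+\<tau>^2)*(X^2-Y^2) \<and> X^2-Y^2 > 0"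
proof -
  have tt: "1 - \<tau>^2 > 0"
  proof -
    have "\<tau>*\<tau> < \<tau>*1" using t0 t1 by (intro mult_strict_left_mono) auto
    thus ?thesis using t1 by (simp add: power2_eq_square)
  qed
  have Y2: "Y^2 \<le> \<tau>^2 * X^2"
  proof -
    have "\<bar>Y\<bar>^2 \<le> (\<tau>*\<bar>X\<bar>)^2" using power_mono[OF Yb, of 2] by simp
    thus ?thesis by (simp add: power_mult_distrib)
  qed
  have X2: "X^2 > 0" using X by simp
  have D1: "X^2 - Y^2 \<ge> (1-\<tau>^2) * X^2" using Y2 by (simp add: algebra_simps)
  have "(1-\<tau>^2) * X^2 > 0" using tt X2 by simp
  hence Dp: "X^2 - Y^2 > 0" using D1 by linarith
  have "\<bar>X\<bar> * \<bar>Y\<bar> \<le> \<bar>X\<bar> * (\<tau> * \<bar>X\<bar>)" using Yb by (intro mult_left_mono) auto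
  hence XY: "\<bar>2*X*Y\<bar> \<le> 2*\<tau>*X^2" by (simp add: abs_mult power2_eq_square algebra_simps)
  have "(1-\<tau>^2) * \<bar>2*X*Y\<bar> \<le> (1-\<tau>^2) * (2*\<tau>*X^2)" using XY tt by (intro mult_left_mono) auto
  also have "... = 2*\<tau>*((1-\<tau>^2) * X^2)" by (simp add: algebra_simps)
  also have "... \<le> 2*\<tau>*(X^2-Y^2)" using D1 t0 by (intro mult_left_mono) auto
  finally have A1: "(1-\<tau>^2) * \<bar>2*X*Y\<bar> \<le> 2*\<tau>*(X^2-Y^2)" .
  have "\<tau>^2 * Y^2 \<ge> 0" by simp
  hence A2: "(1-\<tau>^2)*(X^2+Y^2) \<le> (1+\<tau>^2)*(X^2-Y^2)" using Y2 by (simp add: algebra_simps)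
  show ?thesis using A1 A2 Dp by blast
qed

lemma sqrt_sector:
  fixes X Y \<tau> :: real
  assumes X: "X \<ge> 0" and D: "X^2 - Y^2 > 0" and H: "(1-\<tau>^2) * \<bar>2*X*Y\<bar> \<le> 2*\<tau>*(X^2-Y^2)"
    and t0: "0 < \<tau>" and t1: "\<tau> < 1"
  shows "\<bar>Y\<bar> \<le> \<tau> * X"
proof (rule ccontr)
  assume "\<not> \<bar>Y\<bar> \<le> \<tau> * X"
  hence r: "\<bar>Y\<bar> - \<tau> * X > 0" by simp
  have "X + \<tau> * \<bar>Y\<bar> \<ge> 0" using X t0 by simp
  moreover have "X \<noteq> 0" using D by (auto simp: power2_eq_square)
  moreover have "\<tau> * \<bar>Y\<bar> \<ge> 0" using t0 by simp
  ultimately have "X + \<tau> * \<bar>Y\<bar> > 0" using X by linarith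
  hence "2 * ((\<bar>Y\<bar> - \<tau> * X) * (X + \<tau> * \<bar>Y\<bar>)) > 0" using r by simp
  moreover have "2 * ((\<bar>Y\<bar> - \<tau> * X) * (X + \<tau> * \<bar>Y\<bar>)) = (1-\<tau>^2) * \<bar>2*X*Y\<bar> - 2*\<tau>*(X^2-Y^2)"
    using X by (simp add: abs_mult power2_eq_square algebra_simps)
  ultimately show False using H by linarith
qed

lemma p_large:
  fixes t :: complex
  assumes "4 \<le> cmod t"
  shows "cmod t ^ 3 / 2 \<le> cmod (t^3 + t^2 + 3*t - 1)"
proof -
  define r where "r = cmod t"
  define q where "q = t^3 + t^2 + 3*t - 1"
  have e: "t^3 = q - t^2 - 3*t + 1" by (simp add: q_def)
  have "cmod (q - t^2 - 3*t + 1) \<le> cmod (q - t^2 - 3*t) + cmod (1::complex)" by (rule norm_triangle_ineq)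
  moreover have "cmod (q - t^2 - 3*t) \<le> cmod (q - t^2) + cmod (3*t)" by (rule norm_triangle_ineq4)
  moreover have "cmod (q - t^2) \<le> cmod q + cmod (t^2)" by (rule norm_triangle_ineq4)
  moreover have "cmod (t^3) = cmod (q - t^2 - 3*t + 1)" using e by simp
  ultimately have "cmod (t^3) \<le> cmod q + cmod (t^2) + cmod (3*t) + cmod (1::complex)"
    by linarith
  hence tri: "r^3 \<le> cmod q + r^2 + 3*r + 1" by (simp add: r_def norm_power norm_mult)
  have r4: "r \<ge> 4" using assms by (simp add: r_def)
  have "r^2 * (r/2 - 1) \<ge> r^2 * 1" using r4 by (intro mult_left_mono) auto
  moreover have "r * (r - 3) \<ge> 4 * 1" using r4 by (intro mult_mono) auto
  ultimately have "r^3/2 - r^2 - 3*r - 1 \<ge> 0" by (simp add: power2_eq_square power3_eq_cube algebra_simps)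
  thus ?thesis using tri by (simp add: r_def q_def)
qed



theorem lemma6p3:
  fixes N :: nat and \<epsilon> \<eta> :: real
  assumes "N \<ge> 2" and "0 < \<epsilon>" and "\<epsilon> < pi / 2"
    and "0 < \<eta>" and "\<eta> < min (pi / 4) (\<epsilon> / 2)"
  shows "\<exists>c>0. \<forall>lam \<in> Sigma_sector \<epsilon>. \<forall>\<xi> :: nat \<Rightarrow> complex.
           (\<forall>j\<in>{1..N-1}. \<xi> j \<in> tSigma_sector \<eta>) \<longrightarrow>
           (let A = csqrt (\<Sum>j=1..N-1. (\<xi> j)^2);
                B = csqrt (lam + A^2);
                tA = sqrt (\<Sum>j=1..N-1. (cmod (\<xi> j))^2)
            in c * (sqrt (cmod lam) + tA) ^ 3 \<le> cmod (Dfun A B))"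
proof -
  note N = assms(1) and e0 = assms(2) and e1 = assms(3) and h0 = assms(4)
  have h1: "\<eta> < pi/4" and h2: "2*\<eta> < \<epsilon>" using assms(5) by auto
  define \<tau> where "\<tau> = tan \<eta>"
  define T where "T = tan \<epsilon>"
  have t0: "0 < \<tau>" unfolding \<tau>_def using h0 h1 by (intro tan_gt_zero) auto
  have t1: "\<tau> < 1"
  proof -
    have "tan \<eta> < tan (pi/4)" using h0 h1 by (intro tan_monotone) auto
    thus ?thesis by (simp add: \<tau>_def tan_45)
  qed
  have tt: "1 - \<tau>^2 > 0"
  proof -
    have "\<tau>*\<tau> < \<tau>*1" using t0 t1 by (intro mult_strict_left_mono) auto
    thus ?thesis using t1 by (simp add: power2_eq_square)
  qed
  have TT: "T * (1 - \<tau>^2) > 2 * \<tau>"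
  proof -
    have c1: "cos \<eta> \<noteq> 0" using h0 h1 cos_gt_zero_pi[of \<eta>] by auto
    have c2: "cos (2*\<eta>) \<noteq> 0" using h0 h1 cos_gt_zero_pi[of "2*\<eta>"] by auto
    have "tan (2*\<eta>) = 2*\<tau>/(1-\<tau>^2)" unfolding \<tau>_def by (rule tan_double[OF c1 c2])
    moreover have "tan (2*\<eta>) < T" unfolding T_def using h0 h2 e1 by (intro tan_monotone) auto
    ultimately have "2*\<tau>/(1-\<tau>^2) < T" by simp
    thus ?thesis using tt by (simp add: divide_less_eq)
  qed
  obtain m where m0: "m > 0" and mb: "\<forall>u t::complex. cmod u = 1 \<longrightarrow> \<bar>Im u\<bar> \<le> \<tau> * Re u \<longrightarrow> cmod t \<le> 4
     \<longrightarrow> 0 \<le> Re (t*u) \<longrightarrow> (0 \<le> Re ((t^2-1)*u^2) \<or> - T * Re ((t^2-1)*u^2) \<le> \<bar>Im ((t^2-1)*u^2)\<bar>)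
     \<longrightarrow> m \<le> cmod (t^3 + t^2 + 3*t - 1)"
    using compact_bound[OF t0 t1 TT] by blast
  define K0 where "K0 = (1+\<tau>^2)/(1-\<tau>^2)"
  define k1 where "k1 = sqrt K0"
  define M where "M = 5 + k1"
  define c where "c = min m 32 / M^3"
  have K0p: "K0 > 0" using tt by (simp add: K0_def add_pos_nonneg)
  have k1p: "k1 \<ge> 0" using K0p by (simp add: k1_def)
  have Mp: "M > 0" using k1p by (simp add: M_def)
  have cp: "c > 0" using m0 Mp by (simp add: c_def)
  have cm: "c * M^3 \<le> m" "c * M^3 \<le> 32" using Mp by (simp_all add: c_def)
  show ?thesis
  proof (intro exI[of _ c] conjI cp ballI allI impI)
    fix lam \<xi>
    assume lamS: "lam \<in> Sigma_sector \<epsilon>" and xiS: "\<forall>j\<in>{1..N-1}. \<xi> j \<in> tSigma_sector \<eta>"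
    define S where "S = (\<Sum>j=1..N-1. (\<xi> j)^2)"
    define A where "A = csqrt S"
    define B where "B = csqrt (lam + A^2)"
    define tA where "tA = sqrt (\<Sum>j=1..N-1. (cmod (\<xi> j))^2)"
    define J where "J = {1..N-1}"
    have Jne: "J \<noteq> {}" and Jf: "finite J" using N by (auto simp: J_def)
    have pj: "(1-\<tau>^2) * \<bar>Im ((\<xi> j)^2)\<bar> \<le> 2*\<tau>*Re ((\<xi> j)^2) \<and> (1-\<tau>^2)*(cmod (\<xi> j))^2 \<le> (1+\<tau>^2)*Re ((\<xi> j)^2) \<and> Re ((\<xi> j)^2) > 0"
      if "j \<in> J" for j
    proof -
      have "\<bar>Im (\<xi> j)\<bar> \<le> tan \<eta> * \<bar>Re (\<xi> j)\<bar> \<and> Re (\<xi> j) \<noteq> 0"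
        using xi_conv[of "\<xi> j" \<eta>] xiS that h0 h1 by (auto simp: J_def)
      hence "(1-\<tau>^2) * \<bar>2*Re (\<xi> j)*Im (\<xi> j)\<bar> \<le> 2*\<tau>*((Re (\<xi> j))^2-(Im (\<xi> j))^2) \<and> (1-\<tau>^2)*((Re (\<xi> j))^2+(Im (\<xi> j))^2) \<le> (1+\<tau>^2)*((Re (\<xi> j))^2-(Im (\<xi> j))^2) \<and> (Re (\<xi> j))^2-(Im (\<xi> j))^2 > 0"
        using sq_conv[of "Re (\<xi> j)" "Im (\<xi> j)" \<tau>] t0 t1 by (auto simp: \<tau>_def)
      moreover have "Re ((\<xi> j)^2) = (Re (\<xi> j))^2-(Im (\<xi> j))^2" "Im ((\<xi> j)^2) = 2*Re (\<xi> j)*Im (\<xi> j)"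
        "(cmod (\<xi> j))^2 = (Re (\<xi> j))^2+(Im (\<xi> j))^2"
        by (simp_all add: power2_eq_square cmod_power2[unfolded power2_eq_square])
      ultimately show ?thesis by simp
    qed
    have ReS: "Re S = (\<Sum>j\<in>J. Re ((\<xi> j)^2))" and ImS: "Im S = (\<Sum>j\<in>J. Im ((\<xi> j)^2))"
      by (simp_all add: S_def J_def Re_sum Im_sum)
    have ReSp: "Re S > 0" unfolding ReS using pj Jne Jf by (intro sum_pos) auto
    have "\<bar>Im S\<bar> \<le> (\<Sum>j\<in>J. \<bar>Im ((\<xi> j)^2)\<bar>)" unfolding ImS by (rule sum_abs)
    hence "(1-\<tau>^2) * \<bar>Im S\<bar> \<le> (1-\<tau>^2) * (\<Sum>j\<in>J. \<bar>Im ((\<xi> j)^2)\<bar>)" using tt by (intro mult_left_mono) auto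
    also have "... = (\<Sum>j\<in>J. (1-\<tau>^2) * \<bar>Im ((\<xi> j)^2)\<bar>)" by (simp add: sum_distrib_left)
    also have "... \<le> (\<Sum>j\<in>J. 2*\<tau>*Re ((\<xi> j)^2))" using pj by (intro sum_mono) auto
    also have "... = 2*\<tau>*Re S" unfolding ReS by (simp add: sum_distrib_left)
    finally have ImSb: "(1-\<tau>^2) * \<bar>Im S\<bar> \<le> 2*\<tau>*Re S" .
    have "(1-\<tau>^2) * (\<Sum>j\<in>J. (cmod (\<xi> j))^2) = (\<Sum>j\<in>J. (1-\<tau>^2) * (cmod (\<xi> j))^2)" by (simp add: sum_distrib_left)
    also have "... \<le> (\<Sum>j\<in>J. (1+\<tau>^2)*Re ((\<xi> j)^2))" using pj by (intro sum_mono) auto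
    also have "... = (1+\<tau>^2)*Re S" unfolding ReS by (simp add: sum_distrib_left)
    finally have tAb0: "(1-\<tau>^2) * (\<Sum>j\<in>J. (cmod (\<xi> j))^2) \<le> (1+\<tau>^2)*Re S" .
    hence tAb1: "(\<Sum>j\<in>J. (cmod (\<xi> j))^2) \<le> K0 * Re S" using tt by (simp add: K0_def field_simps)
    have AS: "A^2 = S" by (simp add: A_def)
    have ReA: "Re A \<ge> 0" unfolding A_def by (rule Re_csqrt)
    have ReS2: "Re S = (Re A)^2 - (Im A)^2" and ImS2: "Im S = 2 * Re A * Im A"
      using AS by (auto simp: power2_eq_square)
    have ImA: "\<bar>Im A\<bar> \<le> \<tau> * Re A"
      using sqrt_sector[of "Re A" "Im A" \<tau>] ReA ReSp ImSb t0 t1 unfolding ReS2 ImS2 by auto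
    have S0: "S \<noteq> 0" using ReSp by auto
    have A0: "A \<noteq> 0" using S0 AS by auto
    define a where "a = cmod A"
    have ap: "a > 0" using A0 by (simp add: a_def)
    have a2: "a^2 = cmod S" using AS by (simp add: a_def norm_power[symmetric])
    have "Re S \<le> cmod S" by (rule complex_Re_le_cmod)
    hence "(\<Sum>j\<in>J. (cmod (\<xi> j))^2) \<le> K0 * a^2" using tAb1 K0p a2 by (smt (verit) mult_left_mono)
    hence "tA \<le> sqrt (K0 * a^2)" by (simp add: tA_def J_def)
    also have "... = k1 * a" using ap by (simp add: k1_def real_sqrt_mult)
    finally have tAb: "tA \<le> k1 * a" .
    define u where "u = A / of_real a"
    define t where "t = B / A"
    have Bt: "B = t * A" using A0 by (simp add: t_def)
    have u1: "cmod u = 1" using ap by (simp add: u_def a_def norm_divide)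
    have Reu: "Re u = Re A / a" and Imu: "Im u = Im A / a" by (simp_all add: u_def)
    have Imub: "\<bar>Im u\<bar> \<le> \<tau> * Re u" using ImA ap unfolding Reu Imu by (simp add: divide_right_mono)
    have tu: "t * u = B / of_real a" using A0 by (simp add: t_def u_def)
    have Retu: "0 \<le> Re (t*u)" unfolding tu using Re_csqrt[of "lam + A^2"] ap by (simp add: B_def)
    have B2: "B^2 = lam + A^2" by (simp add: B_def)
    have zl: "(t^2-1)*u^2 = lam / of_real (a^2)"
    proof -
      have "(t^2-1)*u^2 = (B^2 - A^2) / (of_real a)^2" using A0 ap by (simp add: t_def u_def field_simps)
      thus ?thesis using B2 by simp
    qed
    have a2p: "a^2 > 0" using ap by simp
    have lc: "0 \<le> Re lam \<or> - T * Re lam \<le> \<bar>Im lam\<bar>" unfolding T_def using lam_conv[OF lamS e0 e1] .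
    have dj: "0 \<le> Re ((t^2-1)*u^2) \<or> - T * Re ((t^2-1)*u^2) \<le> \<bar>Im ((t^2-1)*u^2)\<bar>"
    proof -
      have r: "Re ((t^2-1)*u^2) = Re lam / a^2" and i: "Im ((t^2-1)*u^2) = Im lam / a^2"
        unfolding zl by (simp_all add: Re_divide_of_real Im_divide_of_real)
      show ?thesis unfolding r i using lc
      proof
        assume "0 \<le> Re lam" thus "0 \<le> Re lam / a^2 \<or> - T * (Re lam / a^2) \<le> \<bar>Im lam / a^2\<bar>"
          using a2p by simp
      next
        assume "- T * Re lam \<le> \<bar>Im lam\<bar>"
        hence "(- T * Re lam) / a^2 \<le> \<bar>Im lam\<bar> / a^2" using a2p by (intro divide_right_mono) auto
        thus "0 \<le> Re lam / a^2 \<or> - T * (Re lam / a^2) \<le> \<bar>Im lam / a^2\<bar>"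
          using a2p by (simp add: abs_divide)
      qed
    qed
    define r where "r = cmod t"
    have Deq: "Dfun A B = A^3 * (t^3 + t^2 + 3*t - 1)" unfolding Dfun_def Bt
      by (simp add: power2_eq_square power3_eq_cube algebra_simps)
    have Dn: "cmod (Dfun A B) = a^3 * cmod (t^3 + t^2 + 3*t - 1)" unfolding Deq
      by (simp add: norm_mult norm_power a_def)
    have lamq: "lam = A^2 * (t^2 - 1)" using B2 Bt by (simp add: power_mult_distrib algebra_simps)
    have "cmod lam = a^2 * cmod (t^2 - 1)" unfolding lamq by (simp add: norm_mult norm_power a_def)
    also have "... \<le> a^2 * (r+1)^2"
    proof -
      have "cmod (t^2 - 1) \<le> cmod (t^2) + cmod (1::complex)" by (rule norm_triangle_ineq4)
      hence "cmod (t^2 - 1) \<le> r^2 + 1" by (simp add: r_def norm_power)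
      also have "... \<le> (r+1)^2" using r_def by (simp add: power2_eq_square algebra_simps)
      finally show ?thesis using a2p by (intro mult_left_mono) auto
    qed
    finally have "cmod lam \<le> (a*(r+1))^2" by (simp add: power_mult_distrib)
    hence "sqrt (cmod lam) \<le> sqrt ((a*(r+1))^2)" by (rule real_sqrt_le_mono)
    also have "... = a*(r+1)" using ap by (simp add: r_def)
    finally have sl: "sqrt (cmod lam) \<le> a*(r+1)" .
    have L: "sqrt (cmod lam) + tA \<le> a * (r + 1 + k1)" using sl tAb by (simp add: algebra_simps)
    have "0 \<le> (\<Sum>j=1..N-1. (cmod (\<xi> j))^2)" by (intro sum_nonneg) auto
    hence "0 \<le> tA" by (simp add: tA_def)
    hence L0: "0 \<le> sqrt (cmod lam) + tA" by simp
    have r0: "r \<ge> 0" by (simp add: r_def)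
    have main: "c * (sqrt (cmod lam) + tA)^3 \<le> cmod (Dfun A B)"
    proof (cases "r \<le> 4")
      case True
      have "a * (r + 1 + k1) \<le> a * M" using True ap by (simp add: M_def)
      hence "sqrt (cmod lam) + tA \<le> a * M" using L by linarith
      hence "(sqrt (cmod lam) + tA)^3 \<le> (a*M)^3" using L0 by (rule power_mono)
      hence "c * (sqrt (cmod lam) + tA)^3 \<le> c * (a*M)^3" using cp by (intro mult_left_mono) auto
      also have "... = a^3 * (c * M^3)" by (simp add: power_mult_distrib)
      also have "... \<le> a^3 * m" using cm ap by (intro mult_left_mono) auto
      also have "... \<le> a^3 * cmod (t^3 + t^2 + 3*t - 1)"
        using mb u1 Imub True Retu dj ap by (intro mult_left_mono) (auto simp: r_def)
      finally show ?thesis using Dn by simp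
    next
      case False
      have "r + 1 + k1 \<le> r * M / 4"
      proof -
        have "4 * (1 + k1) \<le> r * (1 + k1)" using False k1p by (intro mult_right_mono) auto
        thus ?thesis by (simp add: M_def algebra_simps)
      qed
      hence "a * (r + 1 + k1) \<le> a * (r * M / 4)" using ap by (intro mult_left_mono) auto
      hence "sqrt (cmod lam) + tA \<le> a * r * M / 4" using L by simp
      hence "(sqrt (cmod lam) + tA)^3 \<le> (a * r * M / 4)^3" using L0 by (rule power_mono)
      hence "c * (sqrt (cmod lam) + tA)^3 \<le> c * (a * r * M / 4)^3" using cp by (intro mult_left_mono) auto
      also have "... = (a^3 * r^3 / 64) * (c * M^3)" by (simp add: power_mult_distrib power_divide)
      also have "... \<le> (a^3 * r^3 / 64) * 32" using cm ap r0 by (intro mult_left_mono) auto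
      also have "... = a^3 * (r^3 / 2)" by simp
      also have "... \<le> a^3 * cmod (t^3 + t^2 + 3*t - 1)"
        using p_large[of t] False ap by (intro mult_left_mono) (auto simp: r_def)
      finally show ?thesis using Dn by simp
    qed
    show "let A = csqrt (\<Sum>j=1..N-1. (\<xi> j)^2);
                B = csqrt (lam + A^2);
                tA = sqrt (\<Sum>j=1..N-1. (cmod (\<xi> j))^2)
            in c * (sqrt (cmod lam) + tA) ^ 3 \<le> cmod (Dfun A B)"
      using main unfolding Let_def A_def B_def S_def tA_def .
  qed
qed

end
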